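(* Let $L$ be a finite extension of $\mathbb{Z}_\mathrm{max}$. Then $L\cong F^{(n)}$ as extensions of $\mathbb{Z}_\mathrm{max}$ for some positive integer $n$.
   Context: A (commutative) semiring is a set with two binary operations, addition and multiplication, each making it a commutative monoid (with identities $0$ and $1$), such that multiplication distributes over addition. A semifield is a semiring in which every nonzero element is a multiplicative unit. $\mathbb{Z}_\mathrm{max}=\mathbb{Z}\cup\{-\infty\}$ is the semifield whose addition is $\max$ and whose multiplication is ordinary addition of integers (so its zero is $-\infty$ and its one is the integer $0$). Writing $u$ for the integer $1$ viewed in $\mathbb{Z}_\mathrm{max}$, we have $\mathbb{Z}_\mathrm{max}=\{0\}\cup\{u^k: k\in\mathbb{Z}\}$ with $u^a+u^b=u^{\max(a,b)}$. An extension of a semifield $K$ is a semifield $L$ together with an injective semiring homomorphism $K\to L$; it is finite if this homomorphism makes $L$ a finitely generated $K$-semimodule. For a positive integer $n$, $F^{(n)}$ denotes the extension of $\mathbb{Z}_\mathrm{max}$ given by $L=\mathbb{Z}_\mathrm{max}$ and the injective homomorphism $\mathbb{Z}_\mathrm{max}\to\mathbb{Z}_\mathrm{max}$, $u^k\mapsto u^{nk}$, $0\mapsto 0$. An isomorphism of extensions of $K$ is a semiring isomorphism compatible with the embeddings of $K$. *)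

theory Defs
  imports Main
begin

text \<open>The semifield Z_max, represented on int option: None is -infinity (the
  semiring zero), Some k is u^k.  Addition is max, multiplication is integer addition.\<close>

type_synonym zmax = "int option"

fun zmax_add :: "zmax \<Rightarrow> zmax \<Rightarrow> zmax" where
  "zmax_add None y = y"
| "zmax_add x None = x"
| "zmax_add (Some a) (Some b) = Some (max a b)"

fun zmax_mult :: "zmax \<Rightarrow> zmax \<Rightarrow> zmax" where
  "zmax_mult (Some a) (Some b) = Some (a + b)"
| "zmax_mult _ _ = None"

definition zmax_zero :: zmax where "zmax_zero = None"
definition zmax_one :: zmax where "zmax_one = Some 0"

definition is_semifield :: "'a::comm_semiring_1 itself \<Rightarrow> bool" where
  "is_semifield _ \<longleftrightarrow> (\<forall>x::'a. x \<noteq> 0 \<longrightarrow> (\<exists>y. x * y = 1))"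

definition zmax_hom_to :: "(zmax \<Rightarrow> 'a::comm_semiring_1) \<Rightarrow> bool" where
  "zmax_hom_to \<phi> \<longleftrightarrow>
     (\<forall>x y. \<phi> (zmax_add x y) = \<phi> x + \<phi> y) \<and>
     (\<forall>x y. \<phi> (zmax_mult x y) = \<phi> x * \<phi> y) \<and>
     \<phi> zmax_zero = 0 \<and> \<phi> zmax_one = 1"

definition hom_to_zmax :: "('a::comm_semiring_1 \<Rightarrow> zmax) \<Rightarrow> bool" where
  "hom_to_zmax \<psi> \<longleftrightarrow>
     (\<forall>x y. \<psi> (x + y) = zmax_add (\<psi> x) (\<psi> y)) \<and>
     (\<forall>x y. \<psi> (x * y) = zmax_mult (\<psi> x) (\<psi> y)) \<and>
     \<psi> 0 = zmax_zero \<and> \<psi> 1 = zmax_one"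

definition zmax_extension :: "(zmax \<Rightarrow> 'a::comm_semiring_1) \<Rightarrow> bool" where
  "zmax_extension \<phi> \<longleftrightarrow> is_semifield TYPE('a) \<and> zmax_hom_to \<phi> \<and> inj \<phi>"

text \<open>Finite: L is a finitely generated Z_max-semimodule via \<phi>
  (every element is a Z_max-linear combination of a fixed finite set).\<close>
definition finite_zmax_extension :: "(zmax \<Rightarrow> 'a::comm_semiring_1) \<Rightarrow> bool" where
  "finite_zmax_extension \<phi> \<longleftrightarrow> zmax_extension \<phi> \<and>
     (\<exists>S::'a set. finite S \<and> (\<forall>x. \<exists>c::'a \<Rightarrow> zmax. x = (\<Sum>s\<in>S. \<phi> (c s) * s)))"

text \<open>The embedding of F^(n): u^k \<mapsto> u^(nk), 0 \<mapsto> 0.\<close>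
definition Fn_embed :: "nat \<Rightarrow> zmax \<Rightarrow> zmax" where
  "Fn_embed n x = map_option (\<lambda>k. int n * k) x"

definition iso_to_Fn :: "(zmax \<Rightarrow> 'a::comm_semiring_1) \<Rightarrow> nat \<Rightarrow> bool" where
  "iso_to_Fn \<phi> n \<longleftrightarrow>
     (\<exists>\<psi>::'a \<Rightarrow> zmax. bij \<psi> \<and> hom_to_zmax \<psi> \<and> (\<forall>x. \<psi> (\<phi> x) = Fn_embed n x))"

end

theory Submission
  imports Defs
begin



definition lq :: "'a::comm_semiring_1 \<Rightarrow> 'a \<Rightarrow> bool" where "lq x y \<longleftrightarrow> x + y = y"

locale IS =
  fixes \<phi> :: "zmax \<Rightarrow> 'a::comm_semiring_1"
  assumes ext: "finite_zmax_extension \<phi>"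
begin

definition T :: "int \<Rightarrow> 'a" where "T k = \<phi> (Some k)"

lemma hom: "zmax_hom_to \<phi>" and inj\<phi>: "inj \<phi>" and sf: "is_semifield TYPE('a)"
  using ext unfolding finite_zmax_extension_def zmax_extension_def by auto

lemma fg: "\<exists>S::'a set. finite S \<and> (\<forall>x. \<exists>c::'a \<Rightarrow> zmax. x = (\<Sum>s\<in>S. \<phi> (c s) * s))"
  using ext unfolding finite_zmax_extension_def by auto

lemma phi_None: "\<phi> None = 0" using hom unfolding zmax_hom_to_def zmax_zero_def by auto
lemma T_add: "T (a + b) = T a * T b"
  using hom unfolding zmax_hom_to_def T_def by (metis zmax_mult.simps(1))
lemma T0: "T 0 = 1" using hom unfolding zmax_hom_to_def T_def zmax_one_def by auto
lemma T_max: "T a + T b = T (max a b)"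
  using hom unfolding zmax_hom_to_def T_def by (metis zmax_add.simps(3))
lemma T_inj: "T a = T b \<Longrightarrow> a = b" using inj\<phi> unfolding T_def inj_def by auto
lemma T_inv: "T a * T (-a) = 1" by (metis T_add T0 add.right_inverse)
lemma T_nz: "T a \<noteq> 0" using T_inv by (metis mult_zero_left zero_neq_one)
lemma T_pow: "T a ^ n = T (a * int n)"
  by (induction n) (auto simp: T0 T_add[symmetric] algebra_simps)

lemma idem1: "1 + 1 = (1::'a)" by (metis T0 T_max max.idem)
lemma idem: "x + x = (x::'a)"
proof -
  have "x + x = x * 1 + x * 1" by simp
  also have "\<dots> = x * (1 + 1)" by (rule distrib_left[symmetric])
  also have "\<dots> = x" by (simp only: idem1 mult_1_right)
  finally show ?thesis .
qed

lemma inv_ex: "x \<noteq> 0 \<Longrightarrow> \<exists>y. x * y = (1::'a)" using sf unfolding is_semifield_def by auto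
definition iv :: "'a \<Rightarrow> 'a" where "iv x = (SOME y. x * y = 1)"
lemma iv: "x \<noteq> 0 \<Longrightarrow> x * iv x = 1" unfolding iv_def by (rule someI_ex[OF inv_ex])
lemma iv_nz: assumes "x \<noteq> 0" shows "iv x \<noteq> 0"
proof
  assume "iv x = 0" with iv[OF assms] show False by simp
qed
lemma mult_nz: "x \<noteq> 0 \<Longrightarrow> y \<noteq> 0 \<Longrightarrow> x * y \<noteq> (0::'a)"
proof
  assume a: "x \<noteq> 0" "y \<noteq> 0" "x * y = 0"
  have "y = (iv x * x) * y" using iv[OF a(1)] by (simp add: mult.commute)
  also have "\<dots> = 0" using a(3) by (simp add: mult.assoc)
  finally show False using a(2) by simp
qed
lemma cancel: assumes "x \<noteq> 0" "x * y = x * z" shows "y = (z::'a)"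
proof -
  have "y = (iv x * x) * y" using iv[OF assms(1)] by (simp add: mult.commute)
  also have "\<dots> = iv x * (x * z)" using assms(2) by (simp add: mult.assoc)
  also have "\<dots> = z" using iv[OF assms(1)] by (simp add: mult.assoc[symmetric] mult.commute)
  finally show ?thesis .
qed
lemma pow_nz: "x \<noteq> 0 \<Longrightarrow> x ^ n \<noteq> (0::'a)"
  by (induction n) (auto simp: mult_nz)
lemma add_nz: assumes "x \<noteq> 0" shows "x + y \<noteq> (0::'a)"
proof
  assume h: "x + y = 0"
  have "x = x + (x + y)" using h by simp
  also have "\<dots> = (x + x) + y" by (simp only: add.assoc)
  also have "\<dots> = 0" using h by (simp only: idem)
  finally show False using assms by simp
qed
lemma iv_pow: "x \<noteq> 0 \<Longrightarrow> x ^ n * iv x ^ n = 1"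
  by (metis iv power_mult_distrib power_one)

lemma lq_refl: "lq x (x::'a)" unfolding lq_def by (rule idem)
lemma lq_trans: "lq x y \<Longrightarrow> lq y z \<Longrightarrow> lq x (z::'a)" unfolding lq_def by (metis add.assoc)
lemma lq_antisym: "lq x y \<Longrightarrow> lq y x \<Longrightarrow> x = (y::'a)" unfolding lq_def by (metis add.commute)
lemma lq_add1: "lq x (x + (y::'a))" unfolding lq_def by (metis add.assoc idem)
lemma lq_add2: "lq y (x + (y::'a))" by (metis add.commute lq_add1)
lemma lq_sup: "lq x z \<Longrightarrow> lq y z \<Longrightarrow> lq (x + y) (z::'a)" unfolding lq_def by (metis add.assoc)
lemma lq_sup_iff: "lq (x + y) (z::'a) \<longleftrightarrow> lq x z \<and> lq y z"
  by (meson lq_add1 lq_add2 lq_sup lq_trans)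
lemma lq_0: "lq 0 (x::'a)" by (simp add: lq_def)
lemma lq_mult: "lq x y \<Longrightarrow> lq (x * z) (y * (z::'a))" unfolding lq_def by (metis distrib_right)
lemma lq_mult2: "lq a b \<Longrightarrow> lq c d \<Longrightarrow> lq (a * c) (b * (d::'a))"
  by (metis lq_mult lq_trans mult.commute)
lemma lq_pow: assumes "lq a (b::'a)" shows "lq (a ^ n) (b ^ n)"
proof (induction n)
  case 0 show ?case by (simp add: lq_refl)
next
  case (Suc n) show ?case using lq_mult2[OF assms Suc.IH] by simp
qed
lemma lq_cancel: "z \<noteq> 0 \<Longrightarrow> lq (x * z) (y * z) \<Longrightarrow> lq x (y::'a)"
  by (metis iv lq_mult mult.assoc mult_1_right)
lemma lq_T: "lq (T a) (T b) \<longleftrightarrow> a \<le> b"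
  unfolding lq_def T_max by (metis T_inj max.absorb_iff2)
lemma lq_1_pow: "lq 1 (a::'a) \<Longrightarrow> lq 1 (a ^ n)" by (metis lq_pow power_one)

lemma lq_sum_mono: "(\<And>s. s \<in> A \<Longrightarrow> lq (f s) (g s::'a)) \<Longrightarrow> lq (sum f A) (sum g A)"
proof (induction A rule: infinite_finite_induct)
  case (insert x F)
  have "lq (f x) (g x + sum g F)" using insert(4) lq_add1 lq_trans by blast
  moreover have "lq (sum f F) (g x + sum g F)" using insert lq_add2 lq_trans by blast
  ultimately show ?case using insert(1,2) by (simp add: lq_sup)
qed (auto simp: lq_refl)
lemma lq_in_sum: "finite A \<Longrightarrow> s \<in> A \<Longrightarrow> lq (f s::'a) (sum f A)"
  by (metis lq_add1 sum.remove)
lemma lq_sum_bound: "(\<And>s. s \<in> A \<Longrightarrow> lq (f s) (c::'a)) \<Longrightarrow> lq (sum f A) c"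
  by (induction A rule: infinite_finite_induct) (auto simp: lq_0 lq_sup)
lemma one_split: "(1::'a) + (a + b) = (1 + a) + (1 + b)"
proof -
  have "(1 + a) + (1 + b) = (1 + 1) + (a + b)" by (simp only: ac_simps)
  then show ?thesis by (simp only: idem1)
qed

lemma sum_1: "(\<And>s. s \<in> A \<Longrightarrow> 1 + f s = (1::'a) + g s) \<Longrightarrow> 1 + sum f A = 1 + sum g A"
proof (induction A rule: infinite_finite_induct)
  case (insert x F)
  have "1 + sum f (insert x F) = (1 + f x) + (1 + sum f F)" using insert(1,2) by (simp add: one_split)
  moreover have "1 + sum g (insert x F) = (1 + g x) + (1 + sum g F)" using insert(1,2) by (simp add: one_split)
  ultimately show ?case using insert by simp
qed auto

end



lemma pigeon:
  assumes "finite B" "\<And>i::nat. f i \<in> B"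
  shows "\<exists>i j. i < j \<and> f i = f j"
proof -
  have "\<not> inj_on f {..card B}"
  proof
    assume "inj_on f {..card B}"
    moreover have "f ` {..card B} \<subseteq> B" using assms(2) by blast
    ultimately have "card {..card B} \<le> card B" using card_inj_on_le assms(1) by blast
    then show False by simp
  qed
  then obtain i j where "i \<noteq> j" "f i = f j" unfolding inj_on_def by blast
  then show ?thesis
  proof (cases "i < j")
    case True then show ?thesis using \<open>f i = f j\<close> by blast
  next
    case False then have "j < i" using \<open>i \<noteq> j\<close> by simp
    then show ?thesis using \<open>f i = f j\<close> by (intro exI[of _ j] exI[of _ i]) simp
  qed
qed

context IS begin

lemma pw: "((z::'a) + 1) ^ Suc n = (z + 1) ^ n + z ^ Suc n"
proof (induction n)
  case 0 show ?case by (simp add: add.commute)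
next
  case (Suc n)
  define A where "A = (z + 1) ^ n * z"
  define B where "B = (z + 1) ^ Suc n"
  have "lq A B" unfolding A_def B_def using lq_mult2[OF lq_refl lq_add1, of "(z+1)^n" z 1]
    by (simp add: mult.commute)
  hence AB: "A + B = B" unfolding lq_def .
  have "(z + 1) ^ Suc (Suc n) = B * z + B" unfolding B_def by (simp add: algebra_simps)
  also have "\<dots> = ((z + 1) ^ n + z ^ Suc n) * z + B" using Suc unfolding B_def by simp
  also have "\<dots> = z ^ Suc (Suc n) + (A + B)" unfolding A_def by (simp add: algebra_simps)
  also have "\<dots> = B + z ^ Suc (Suc n)" using AB by (simp add: add.commute)
  finally show ?case unfolding B_def .
qed

lemma le1:
  assumes "lq (z ^ d) (1::'a)" "d \<ge> 1"
  shows "lq z 1"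
proof -
  obtain n where d: "d = Suc n" using assms(2) by (cases d) auto
  have "lq 1 ((z + 1) ^ n)" by (rule lq_1_pow[OF lq_add2])
  hence "lq (z ^ d) ((z + 1) ^ n)" using assms(1) lq_trans by blast
  hence "(z + 1) ^ d = (z + 1) ^ n" using pw[of z n] d unfolding lq_def by (simp add: add.commute)
  hence "(z + 1) ^ n * (z + 1) = (z + 1) ^ n * 1" using d by (simp add: mult.commute)
  moreover have "z + 1 \<noteq> 0" using add_nz[of 1 z] by (simp add: add.commute)
  ultimately have "z + 1 = 1" using cancel pow_nz by blast
  then show ?thesis unfolding lq_def .
qed

lemma torsion:
  assumes "z \<noteq> 0" "z ^ d = (1::'a)" "d \<ge> 1"
  shows "z = 1"
proof -
  have "iv z ^ d = 1" using iv_pow[OF assms(1), of d] assms(2) by simp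
  hence "lq (iv z) 1" using le1[of "iv z" d] assms(3) by (simp add: lq_refl)
  hence "lq (iv z * z) (1 * z)" by (rule lq_mult)
  hence "lq 1 z" using iv[OF assms(1)] by (simp add: mult.commute)
  moreover have "lq z 1" using le1[of z d] assms by (simp add: lq_refl)
  ultimately show ?thesis using lq_antisym by blast
qed

lemma arch:
  assumes x: "x \<noteq> 0"
  shows "\<exists>m. lq x (T m)"
proof -
  obtain S where S: "finite S" "\<forall>x. \<exists>c::'a \<Rightarrow> zmax. x = (\<Sum>s\<in>S. \<phi> (c s) * s)" using fg by blast
  define C where "C j = (SOME c. x ^ j = (\<Sum>s\<in>S. \<phi> (c s) * s))" for j :: nat
  have C: "x ^ j = (\<Sum>s\<in>S. \<phi> (C j s) * s)" for j
  proof -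
    have "\<exists>c. x ^ j = (\<Sum>s\<in>S. \<phi> (c s) * s)" using S(2) by blast
    then show ?thesis unfolding C_def by (rule someI_ex)
  qed
  define supp where "supp j = {s\<in>S. C j s \<noteq> None}" for j
  have "\<And>j. supp j \<in> Pow S" unfolding supp_def by auto
  then obtain i j where ij: "i < j" "supp i = supp j" using pigeon[of "Pow S" supp] S(1) by blast
  define dif where "dif s = the (C j s) - the (C i s)" for s
  define M where "M = Max (insert 0 (dif ` S))"
  have M0: "M \<ge> 0" unfolding M_def using S(1) by simp
  have Md: "s \<in> S \<Longrightarrow> dif s \<le> M" for s unfolding M_def using S(1) by simp
  have trm: "lq (\<phi> (C j s) * s) (T M * (\<phi> (C i s) * s))" if s: "s \<in> S" for s
  proof (cases "C j s")
    case None then show ?thesis by (simp add: phi_None lq_0)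
  next
    case (Some b)
    then have "s \<in> supp j" using s unfolding supp_def by auto
    then obtain a where a: "C i s = Some a" using ij(2) unfolding supp_def by auto
    have "dif s = b - a" unfolding dif_def using a Some by simp
    hence "b - a \<le> M" using Md[OF s] by linarith
    hence "lq (T (b - a)) (T M)" using lq_T by blast
    hence "lq (T (b - a) * (T a * s)) (T M * (T a * s))" by (rule lq_mult)
    moreover have "T (b - a) * (T a * s) = T b * s" using T_add[of "b - a" a] by (simp add: mult.assoc)
    ultimately show ?thesis using a Some unfolding T_def by simp
  qed
  have "lq (x ^ j) (T M * x ^ i)" unfolding C sum_distrib_left by (rule lq_sum_mono) (rule trm)
  moreover have "x ^ j = x ^ (j - i) * x ^ i" using ij(1) by (simp add: power_add[symmetric])
  ultimately have "lq (x ^ (j - i) * x ^ i) (T M * x ^ i)" by simp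
  hence xd: "lq (x ^ (j - i)) (T M)" using lq_cancel pow_nz x by blast
  define d where "d = j - i"
  have d1: "d \<ge> 1" using ij(1) unfolding d_def by simp
  define z where "z = x * T (-M)"
  have "z ^ d = x ^ d * T (- M * int d)" unfolding z_def by (simp add: power_mult_distrib T_pow)
  moreover have "lq (x ^ d * T (- M * int d)) (T M * T (- M * int d))"
    using xd unfolding d_def by (rule lq_mult)
  moreover have "T M * T (- M * int d) = T (M - M * int d)" by (simp add: T_add[symmetric])
  moreover have "lq (T (M - M * int d)) 1"
  proof -
    have "M * 1 \<le> M * int d" using M0 d1 by (intro mult_left_mono) auto
    then show ?thesis using lq_T[of "M - M * int d" 0] by (simp add: T0)
  qed
  ultimately have "lq (z ^ d) 1" using lq_trans[of "z ^ d" "T (M - M * int d)" 1] by simp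
  hence "lq z 1" using le1 d1 by blast
  hence "lq (z * T M) (1 * T M)" by (rule lq_mult)
  moreover have "z * T M = x" unfolding z_def using T_inv[of "-M"] by (simp add: mult.assoc)
  ultimately show ?thesis by auto
qed

lemma arch_low:
  assumes x: "x \<noteq> 0"
  shows "\<exists>m. lq (T m) x"
proof -
  obtain m where "lq (iv x) (T m)" using arch iv_nz x by blast
  hence "lq (iv x * (x * T (-m))) (T m * (x * T (-m)))" by (rule lq_mult)
  moreover have "iv x * (x * T (-m)) = T (-m)" using iv[OF x] by (simp add: mult.assoc[symmetric] mult.commute)
  moreover have "T m * (x * T (-m)) = x" using T_inv[of m] by (simp add: ac_simps)
  ultimately show ?thesis by auto
qed

end



lemma unif_bound:
  assumes "finite A" "\<forall>s\<in>A. \<exists>k::int. P s k" "\<And>s k k'. P s k \<Longrightarrow> k \<le> k' \<Longrightarrow> P s k'"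
  shows "\<exists>K. \<forall>s\<in>A. P s K"
  using assms(1,2)
proof (induction A rule: finite_induct)
  case empty then show ?case by simp
next
  case (insert x F)
  then obtain K where K: "\<forall>s\<in>F. P s K" by blast
  obtain k where k: "P x k" using insert by blast
  have "\<forall>s\<in>insert x F. P s (max K k)"
  proof
    fix s assume "s \<in> insert x F"
    then show "P s (max K k)"
    proof
      assume "s = x" then show ?thesis using k assms(3)[of x k "max K k"] by simp
    next
      assume "s \<in> F" then show ?thesis using K assms(3)[of s K "max K k"] by simp
    qed
  qed
  then show ?case by blast
qed

context IS begin

definition SS :: "'a set" where
  "SS = (SOME S. finite S \<and> (\<forall>x. \<exists>c::'a \<Rightarrow> zmax. x = (\<Sum>s\<in>S. \<phi> (c s) * s)))"

lemma SS: "finite SS" "\<exists>c::'a \<Rightarrow> zmax. x = (\<Sum>s\<in>SS. \<phi> (c s) * s)"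
proof -
  have "finite SS \<and> (\<forall>x. \<exists>c::'a \<Rightarrow> zmax. x = (\<Sum>s\<in>SS. \<phi> (c s) * s))"
    unfolding SS_def by (rule someI_ex) (rule fg)
  then show "finite SS" "\<exists>c::'a \<Rightarrow> zmax. x = (\<Sum>s\<in>SS. \<phi> (c s) * s)" by auto
qed

lemma Kex: "\<exists>K\<ge>0. \<forall>s\<in>SS. s \<noteq> 0 \<longrightarrow> lq s (T K) \<and> lq (T (-K)) s"
proof -
  let ?P = "\<lambda>s k. s \<noteq> 0 \<longrightarrow> lq s (T k) \<and> lq (T (-k)) s"
  have "\<forall>s\<in>SS. \<exists>k. ?P s k"
  proof
    fix s
    show "\<exists>k. ?P s k"
    proof (cases "s = 0")
      case False
      obtain m1 where m1: "lq s (T m1)" using arch False by blast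
      obtain m2 where m2: "lq (T m2) s" using arch_low False by blast
      have "lq s (T (max m1 (-m2)))" using m1 lq_trans lq_T by (metis max.cobounded1)
      moreover have "lq (T (- max m1 (-m2))) s" using m2 lq_trans lq_T
        by (metis max.cobounded2 minus_le_iff)
      ultimately show ?thesis by blast
    qed simp
  qed
  moreover have "?P s k'" if "?P s k" "k \<le> k'" for s k k'
    using that lq_trans lq_T by (metis neg_le_iff_le)
  ultimately obtain K where K: "\<forall>s\<in>SS. ?P s K" using unif_bound[OF SS(1), of ?P] by blast
  have "\<forall>s\<in>SS. ?P s (max K 0)"
    using K lq_trans lq_T by (metis max.cobounded1 neg_le_iff_le)
  then show ?thesis by (intro exI[of _ "max K 0"]) simp
qed

definition KK :: int where "KK = (SOME K. K \<ge> 0 \<and> (\<forall>s\<in>SS. s \<noteq> 0 \<longrightarrow> lq s (T K) \<and> lq (T (-K)) s))"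

lemma KK: "KK \<ge> 0" "s \<in> SS \<Longrightarrow> s \<noteq> 0 \<Longrightarrow> lq s (T KK)" "s \<in> SS \<Longrightarrow> s \<noteq> 0 \<Longrightarrow> lq (T (-KK)) s"
proof -
  have "KK \<ge> 0 \<and> (\<forall>s\<in>SS. s \<noteq> 0 \<longrightarrow> lq s (T KK) \<and> lq (T (-KK)) s)"
    unfolding KK_def using someI_ex[OF Kex] by simp
  then show "KK \<ge> 0" "s \<in> SS \<Longrightarrow> s \<noteq> 0 \<Longrightarrow> lq s (T KK)" "s \<in> SS \<Longrightarrow> s \<noteq> 0 \<Longrightarrow> lq (T (-KK)) s"
    by auto
qed


lemma int_fin: "finite {x. lq 1 x \<and> lq x (T M)}"
proof -
  define R where "R = insert None (Some ` {-KK..M+KK})"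
  define Fs where "Fs = {f. \<forall>x. (x \<in> SS \<longrightarrow> f x \<in> R) \<and> (x \<notin> SS \<longrightarrow> f x = None)}"
  define F where "F = (\<lambda>c. 1 + (\<Sum>s\<in>SS. \<phi> (c s) * s)) ` Fs"
  have "finite Fs" unfolding Fs_def R_def using SS(1) by (intro finite_set_of_finite_funs) auto
  then have finF: "finite F" unfolding F_def by simp
  have "{x. lq 1 x \<and> lq x (T M)} \<subseteq> F"
  proof
    fix x assume "x \<in> {x. lq 1 x \<and> lq x (T M)}"
    then have x1: "lq 1 x" and xM: "lq x (T M)" by auto
    obtain c where c: "x = (\<Sum>s\<in>SS. \<phi> (c s) * s)" using SS(2) by blast
    define c' where "c' = (\<lambda>s. if s \<notin> SS \<or> s = 0 then None else case c s of None \<Rightarrow> None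
        | Some k \<Rightarrow> if k + KK \<le> 0 then None else Some k)"
    have "c' s \<in> R" if s: "s \<in> SS" for s
      proof (cases "s = 0 \<or> c s = None")
        case True then show ?thesis using s unfolding c'_def R_def by auto
      next
        case False
        then obtain k where k: "c s = Some k" and s0: "s \<noteq> 0" by auto
        show ?thesis
        proof (cases "k + KK \<le> 0")
          case True then show ?thesis using s k s0 unfolding c'_def R_def by auto
        next
          case False
          have "lq (T k * s) x" using lq_in_sum[OF SS(1) s, of "\<lambda>s. \<phi> (c s) * s"] k c
            unfolding T_def by simp
          hence "lq (T k * s) (T M)" using xM lq_trans by blast
          moreover have "lq (T (-KK) * T k) (s * T k)" using KK(3)[OF s s0] by (rule lq_mult)
          ultimately have "lq (T (k - KK)) (T M)"
            using lq_trans T_add[of "-KK" k] by (simp add: mult.commute)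
          hence "k - KK \<le> M" using lq_T by blast
          then show ?thesis using s k s0 False unfolding c'_def R_def by auto
        qed
      qed
    then have "c' \<in> Fs" unfolding Fs_def by (auto simp: c'_def)
    moreover have "x = 1 + (\<Sum>s\<in>SS. \<phi> (c' s) * s)"
    proof -
      have "1 + \<phi> (c s) * s = 1 + \<phi> (c' s) * s" if s: "s \<in> SS" for s
      proof (cases "s = 0 \<or> c s = None")
        case True then show ?thesis using s unfolding c'_def by (auto simp: phi_None)
      next
        case False
        then obtain k where k: "c s = Some k" and s0: "s \<noteq> 0" by auto
        show ?thesis
        proof (cases "k + KK \<le> 0")
          case True
          have "lq (T k * s) (T k * T KK)" using lq_mult[OF KK(2)[OF s s0], of "T k"]
            by (simp add: mult.commute)
          moreover have "lq (T k * T KK) 1" using True lq_T[of "k + KK" 0] by (simp add: T_add T0)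
          ultimately have "lq (T k * s) 1" using lq_trans by blast
          then have "1 + T k * s = 1" unfolding lq_def by (simp add: add.commute)
          then show ?thesis using s k s0 True unfolding c'_def T_def by (simp add: phi_None)
        next
          case False then show ?thesis using s k s0 unfolding c'_def by simp
        qed
      qed
      then have "1 + x = 1 + (\<Sum>s\<in>SS. \<phi> (c' s) * s)" unfolding c by (rule sum_1)
      then show ?thesis using x1 unfolding lq_def by simp
    qed
    ultimately show "x \<in> F" unfolding F_def by blast
  qed
  then show ?thesis using finF finite_subset by blast
qed

lemma spread:
  assumes "\<not> lq x (T k)"
  shows "lq (T (k - 2 * KK)) x"
proof -
  obtain c where c: "x = (\<Sum>s\<in>SS. \<phi> (c s) * s)" using SS(2) by blast
  obtain s where s: "s \<in> SS" and ns: "\<not> lq (\<phi> (c s) * s) (T k)"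
    using assms lq_sum_bound[of SS "\<lambda>s. \<phi> (c s) * s" "T k"] unfolding c by blast
  have s0: "s \<noteq> 0"
  proof
    assume "s = 0" with ns show False by (simp add: lq_0)
  qed
  obtain j where j: "c s = Some j" using ns by (cases "c s") (auto simp: phi_None lq_0)
  have "lq (T j * s) (T j * T KK)" using lq_mult[OF KK(2)[OF s s0], of "T j"]
    by (simp add: mult.commute)
  hence "\<not> lq (T (j + KK)) (T k)" using ns j lq_trans unfolding T_def by (metis T_add T_def)
  hence jk: "k < j + KK" using lq_T by simp
  have "lq (T (-KK) * T j) (s * T j)" using KK(3)[OF s s0] by (rule lq_mult)
  hence "lq (T (j - KK)) (T j * s)" using T_add[of "-KK" j] by (simp add: mult.commute)
  moreover have "lq (T j * s) x" using lq_in_sum[OF SS(1) s, of "\<lambda>s. \<phi> (c s) * s"] j c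
    unfolding T_def by simp
  moreover have "lq (T (k - 2 * KK)) (T (j - KK))" using jk lq_T by simp
  ultimately show ?thesis using lq_trans by blast
qed

end



context IS begin

lemma one_nz: "lq 1 a \<Longrightarrow> a \<noteq> (0::'a)"
  unfolding lq_def by auto

lemma unbounded:
  assumes a1: "lq 1 a" and an: "a \<noteq> 1"
  shows "\<exists>n. \<not> lq (a ^ n) (T k)"
proof (rule ccontr)
  assume "\<not> ?thesis"
  then have "\<And>n. a ^ n \<in> {x. lq 1 x \<and> lq x (T k)}" using lq_1_pow[OF a1] by auto
  then obtain i j where ij: "i < j" "a ^ i = a ^ j" using pigeon[OF int_fin] by blast
  have a0: "a \<noteq> 0" using one_nz a1 by blast
  have "a ^ i * a ^ (j - i) = a ^ j" using ij(1) by (simp add: power_add[symmetric])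
  then have "a ^ i * a ^ (j - i) = a ^ i * 1" using ij(2) by simp
  then have "a ^ (j - i) = 1" using cancel pow_nz a0 by blast
  then have "a = 1" using torsion a0 ij(1) by simp
  then show False using an by simp
qed

lemma powl:
  assumes a1: "lq 1 a" and b1: "lq 1 b" and ab: "a * b = a + (b::'a)"
  shows "a ^ n * b = a ^ n + b"
proof (induction n)
  case 0 show ?case using b1 unfolding lq_def by simp
next
  case (Suc n)
  have le: "lq a (a ^ Suc n)" using lq_mult[OF lq_1_pow[OF a1, of n], of a] by (simp add: mult.commute)
  have "a ^ Suc n * b = a * (a ^ n * b)" by (simp add: mult.assoc)
  also have "\<dots> = a ^ Suc n + a * b" using Suc by (simp add: distrib_left)
  also have "\<dots> = (a + a ^ Suc n) + b" using ab by (simp add: ac_simps)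
  also have "\<dots> = a ^ Suc n + b" using le unfolding lq_def by simp
  finally show ?case .
qed

lemma pow2:
  assumes a1: "lq 1 a" and b1: "lq 1 b" and ab: "a * b = a + (b::'a)"
  shows "a ^ n * b ^ m = a ^ n + b ^ m"
proof -
  have "b * a ^ n = b + a ^ n" using powl[OF a1 b1 ab, of n] by (simp add: ac_simps)
  then have "b ^ m * a ^ n = b ^ m + a ^ n" using powl[OF b1 lq_1_pow[OF a1]] by blast
  then show ?thesis by (simp add: ac_simps)
qed

lemma orth:
  assumes a1: "lq 1 a" and b1: "lq 1 b" and ab: "a * b = a + (b::'a)"
  shows "a = 1 \<or> b = 1"
proof (rule ccontr)
  assume "\<not> ?thesis"
  then have an: "a \<noteq> 1" and bn: "b \<noteq> 1" by auto
  have a0: "a \<noteq> 0" and b0: "b \<noteq> 0" using one_nz a1 b1 by auto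
  define D where "D = 2 * KK"
  have D0: "D \<ge> 0" using KK(1) unfolding D_def by simp
  obtain n where n: "\<not> lq (a ^ n) (T D)" using unbounded[OF a1 an] by blast
  have n1: "n \<ge> 1"
  proof (rule ccontr)
    assume "\<not> n \<ge> 1" then have "n = 0" by simp
    with n have "\<not> lq 1 (T D)" by simp
    with D0 show False using lq_T[of 0 D] by (simp add: T0)
  qed
  have ab2: "a ^ n * b ^ n = a ^ n + b ^ n" by (rule pow2[OF a1 b1 ab])
  define w where "w = a ^ n * iv b ^ n"
  define v where "v = b ^ n * iv a ^ n"
  have ib: "b ^ n * iv b ^ n = 1" using iv_pow[OF b0] .
  have ia: "a ^ n * iv a ^ n = 1" using iv_pow[OF a0] .
  have w1: "w + 1 = a ^ n"
  proof -
    have "w + 1 = (a ^ n + b ^ n) * iv b ^ n" unfolding w_def using ib by (simp add: distrib_right)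
    also have "\<dots> = a ^ n * (b ^ n * iv b ^ n)" by (simp only: ab2[symmetric] mult.assoc)
    finally show ?thesis using ib by simp
  qed
  have v1: "v + 1 = b ^ n"
  proof -
    have "v + 1 = (a ^ n + b ^ n) * iv a ^ n" unfolding v_def using ia by (simp add: distrib_right add.commute)
    also have "\<dots> = b ^ n * (a ^ n * iv a ^ n)" by (simp only: ab2[symmetric] ac_simps)
    finally show ?thesis using ia by simp
  qed
  have "w * v = (a ^ n * iv a ^ n) * (b ^ n * iv b ^ n)" unfolding w_def v_def by (simp only: ac_simps)
  then have wv: "w * v = 1" using ia ib by simp
  have "\<not> lq w (T D)"
  proof
    assume "lq w (T D)"
    moreover have "lq 1 (T D)" using D0 lq_T[of 0 D] by (simp add: T0)
    ultimately have "lq (w + 1) (T D)" by (rule lq_sup)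
    with n w1 show False by simp
  qed
  then have "lq (T (D - 2 * KK)) w" by (rule spread)
  then have "lq 1 w" unfolding D_def by (simp add: T0)
  then have "lq (1 * v) (w * v)" by (rule lq_mult)
  then have "lq v 1" using wv by simp
  then have "b ^ n = 1" using v1 unfolding lq_def by simp
  then have "b = 1" using torsion b0 n1 by blast
  then show False using bn by simp
qed

lemma tot1:
  fixes x :: 'a
  assumes x0: "x \<noteq> 0"
  shows "lq x 1 \<or> lq 1 x"
proof -
  define a where "a = x + 1"
  define b where "b = iv x + 1"
  have "a * b = (x * iv x + x) + (iv x + 1)" unfolding a_def b_def
    by (simp only: distrib_right distrib_left mult_1_left mult_1_right ac_simps)
  also have "\<dots> = (1 + x) + (iv x + 1)" using iv[OF x0] by simp
  also have "\<dots> = a + b" unfolding a_def b_def by (simp only: add.commute)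
  finally have "a * b = a + b" .
  moreover have "lq 1 a" "lq 1 b" unfolding a_def b_def by (rule lq_add2)+
  ultimately have "a = 1 \<or> b = 1" using orth by blast
  then show ?thesis
  proof
    assume "a = 1" then show ?thesis unfolding a_def lq_def by simp
  next
    assume "b = 1"
    then have "lq (iv x) 1" unfolding b_def lq_def .
    then have "lq (iv x * x) (1 * x)" by (rule lq_mult)
    then show ?thesis using iv[OF x0] by (simp add: mult.commute)
  qed
qed

lemma tot: "lq x y \<or> lq y (x::'a)"
proof (cases "x = 0 \<or> y = 0")
  case True then show ?thesis using lq_0 by blast
next
  case False
  then have x0: "x \<noteq> 0" and y0: "y \<noteq> 0" by auto
  define z where "z = y * iv x"
  have "z * x = y * (x * iv x)" unfolding z_def by (simp only: ac_simps)
  then have zx: "z * x = y" using iv[OF x0] by simp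
  have "z \<noteq> 0" unfolding z_def using mult_nz iv_nz x0 y0 by blast
  then have "lq z 1 \<or> lq 1 z" by (rule tot1)
  then show ?thesis
  proof
    assume "lq z 1" then have "lq (z * x) (1 * x)" by (rule lq_mult)
    then show ?thesis using zx by simp
  next
    assume "lq 1 z" then have "lq (1 * x) (z * x)" by (rule lq_mult)
    then show ?thesis using zx by simp
  qed
qed

end



context IS begin

lemma has_min:
  assumes "finite A" "A \<noteq> {}"
  shows "\<exists>g\<in>A. \<forall>y\<in>A. lq g (y::'a)"
  using assms
proof (induction A rule: finite_ne_induct)
  case (singleton x) then show ?case by (simp add: lq_refl)
next
  case (insert x F)
  then obtain g where g: "g \<in> F" "\<forall>y\<in>F. lq g y" by blast
  show ?case
  proof (cases "lq x g")
    case True then show ?thesis using g lq_trans lq_refl by blast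
  next
    case False then have "lq g x" using tot by blast
    then show ?thesis using g by blast
  qed
qed

definition gg :: 'a where
  "gg = (SOME g. g \<in> {x. lq 1 x \<and> lq x (T 1) \<and> x \<noteq> 1} \<and> (\<forall>y\<in>{x. lq 1 x \<and> lq x (T 1) \<and> x \<noteq> 1}. lq g y))"

lemma gg: "lq 1 gg" "gg \<noteq> 1" "lq gg (T 1)" "\<And>y. lq 1 y \<Longrightarrow> lq y (T 1) \<Longrightarrow> y \<noteq> 1 \<Longrightarrow> lq gg y"
proof -
  let ?P = "{x. lq 1 x \<and> lq x (T 1) \<and> x \<noteq> 1}"
  have "finite ?P" using int_fin[of 1] by (rule finite_subset[rotated]) auto
  moreover have "T 1 \<in> ?P"
  proof -
    have "lq 1 (T 1)" using lq_T[of 0 1] by (simp add: T0)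
    moreover have "T 1 \<noteq> 1" using T_inj[of 1 0] by (auto simp: T0)
    ultimately show ?thesis by (simp add: lq_refl)
  qed
  ultimately have "\<exists>g\<in>?P. \<forall>y\<in>?P. lq g y" using has_min by blast
  then have "gg \<in> ?P \<and> (\<forall>y\<in>?P. lq gg y)" unfolding gg_def by (rule someI_ex[OF bexE]) blast
  then show "lq 1 gg" "gg \<noteq> 1" "lq gg (T 1)" "\<And>y. lq 1 y \<Longrightarrow> lq y (T 1) \<Longrightarrow> y \<noteq> 1 \<Longrightarrow> lq gg y"
    by auto
qed

lemma g0: "gg \<noteq> 0" using one_nz gg(1) by blast

lemma atom: "lq 1 y \<Longrightarrow> lq y gg \<Longrightarrow> y = 1 \<or> y = gg"
  using gg lq_trans lq_antisym by blast

definition hh :: 'a where "hh = iv gg"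
lemma gh: "gg * hh = 1" unfolding hh_def using iv g0 by blast
lemma ghp: "gg ^ k * hh ^ k = 1" using gh by (metis power_mult_distrib power_one)

lemma g_inj: "gg ^ i = gg ^ j \<Longrightarrow> i = j"
proof (rule ccontr)
  assume h: "gg ^ i = gg ^ j" "i \<noteq> j"
  have "\<exists>a b. a < b \<and> gg ^ a = gg ^ b" using h by (metis linorder_neqE_nat)
  then obtain a b where ab: "a < b" "gg ^ a = gg ^ b" by blast
  have "gg ^ a * gg ^ (b - a) = gg ^ b" using ab(1) by (simp add: power_add[symmetric])
  then have "gg ^ a * gg ^ (b - a) = gg ^ a * 1" using ab(2) by simp
  then have "gg ^ (b - a) = 1" using cancel pow_nz g0 by blast
  then have "gg = 1" using torsion g0 ab(1) by simp
  then show False using gg(2) by simp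
qed

lemma pos_rep:
  assumes x1: "lq 1 x"
  shows "\<exists>k. x = gg ^ k"
proof -
  have x0: "x \<noteq> 0" using one_nz x1 by blast
  obtain M where M: "lq x (T M)" using arch x0 by blast
  define N where "N = {k. lq (gg ^ k) x}"
  have "(\<lambda>k. gg ^ k) ` N \<subseteq> {x. lq 1 x \<and> lq x (T M)}"
    unfolding N_def using lq_1_pow[OF gg(1)] M lq_trans by blast
  then have "finite ((\<lambda>k. gg ^ k) ` N)" using int_fin finite_subset by blast
  moreover have "inj_on (\<lambda>k. gg ^ k) N" using g_inj by (simp add: inj_on_def)
  ultimately have finN: "finite N" using finite_imageD by blast
  have N0: "0 \<in> N" unfolding N_def using x1 by simp
  define k where "k = Max N"
  have kN: "k \<in> N" unfolding k_def using finN N0 Max_in by blast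
  have "Suc k \<notin> N" using Max_ge[OF finN] unfolding k_def by fastforce
  then have nk: "\<not> lq (gg ^ Suc k) x" unfolding N_def by simp
  then have xk: "lq x (gg ^ Suc k)" using tot by blast
  define y where "y = x * hh ^ k"
  have "lq (gg ^ k * hh ^ k) (x * hh ^ k)" using kN unfolding N_def by (simp add: lq_mult)
  then have y1: "lq 1 y" unfolding y_def using ghp by simp
  have "lq (x * hh ^ k) (gg ^ Suc k * hh ^ k)" using xk by (rule lq_mult)
  moreover have "gg ^ Suc k * hh ^ k = gg" using ghp[of k] by (simp add: ac_simps)
  ultimately have yg: "lq y gg" unfolding y_def by simp
  have xy: "x = y * gg ^ k" unfolding y_def using ghp[of k] by (simp add: ac_simps)
  from atom[OF y1 yg] show ?thesis
  proof
    assume "y = 1" then show ?thesis using xy by auto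
  next
    assume "y = gg"
    then have "x = gg ^ Suc k" using xy by simp
    then show ?thesis using nk lq_refl by simp
  qed
qed

definition gp :: "int \<Rightarrow> 'a" where "gp k = gg ^ nat k * hh ^ nat (- k)"

lemma gpq: "int p - int q = k \<Longrightarrow> gg ^ p * hh ^ q = gp k"
proof (cases "k \<ge> 0")
  case True
  assume h: "int p - int q = k"
  then have p: "p = q + nat k" using True by simp
  have "gg ^ p * hh ^ q = gg ^ nat k * (gg ^ q * hh ^ q)" unfolding p by (simp add: power_add ac_simps)
  then show ?thesis unfolding gp_def using ghp True by simp
next
  case False
  assume h: "int p - int q = k"
  then have q: "q = p + nat (-k)" using False by simp
  have "gg ^ p * hh ^ q = hh ^ nat (-k) * (gg ^ p * hh ^ p)" unfolding q by (simp add: power_add ac_simps)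
  then show ?thesis unfolding gp_def using ghp False by simp
qed

lemma gp_add: "gp (a + b) = gp a * gp b"
proof -
  have "gp a * gp b = gg ^ (nat a + nat b) * hh ^ (nat (-a) + nat (-b))"
    unfolding gp_def by (simp add: power_add ac_simps)
  also have "\<dots> = gp (a + b)" by (rule gpq) simp
  finally show ?thesis by simp
qed

lemma gp0: "gp 0 = 1" unfolding gp_def by simp
lemma gp_nz: "gp k \<noteq> 0" using gp_add[of k "-k"] gp0 by (metis mult_zero_left zero_neq_one add.right_inverse)

lemma rep: "x \<noteq> 0 \<Longrightarrow> \<exists>k. x = gp k"
proof -
  assume x0: "x \<noteq> 0"
  from tot1[OF x0] show ?thesis
  proof
    assume "lq 1 x"
    then obtain k where "x = gg ^ k" using pos_rep by blast
    then have "x = gp (int k)" unfolding gp_def by simp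
    then show ?thesis by blast
  next
    assume "lq x 1"
    then have "lq (x * iv x) (1 * iv x)" by (rule lq_mult)
    then have "lq 1 (iv x)" using iv[OF x0] by simp
    then obtain k where k: "iv x = gg ^ k" using pos_rep by blast
    have "x = x * (gg ^ k * hh ^ k)" using ghp by simp
    also have "\<dots> = (x * iv x) * hh ^ k" using k by (simp add: ac_simps)
    also have "\<dots> = gp (- int k)" using iv[OF x0] unfolding gp_def by simp
    finally show ?thesis by blast
  qed
qed

lemma gp_inj: "gp a = gp b \<Longrightarrow> a = b"
proof -
  assume h: "gp a = gp b"
  have "gp b * gp (a - b) = gp b * 1" using gp_add[of b "a - b"] h by simp
  then have e: "gp (a - b) = 1" using cancel gp_nz by blast
  show "a = b"
  proof (rule ccontr)
    assume "a \<noteq> b"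
    then consider "a - b > 0" | "a - b < 0" by linarith
    then show False
    proof cases
      case 1
      then have "gg ^ nat (a - b) = 1" using e unfolding gp_def by simp
      then have "gg = 1" using torsion g0 1 by simp
      then show False using gg(2) by simp
    next
      case 2
      then have "hh ^ nat (b - a) = 1" using e unfolding gp_def by simp
      then have "gg ^ nat (b - a) = 1" using ghp[of "nat (b - a)"] by simp
      then have "gg = 1" using torsion g0 2 by simp
      then show False using gg(2) by simp
    qed
  qed
qed

lemma gp_mono: "a \<le> b \<Longrightarrow> lq (gp a) (gp b)"
proof -
  assume ab: "a \<le> b"
  have "gp b = gp a * gp (b - a)" using gp_add[of a "b - a"] by simp
  also have "gp (b - a) = gg ^ nat (b - a)" unfolding gp_def using ab by simp
  finally have e: "gp b = gp a * gg ^ nat (b - a)" .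
  have "lq (gp a * 1) (gp a * gg ^ nat (b - a))"
    using lq_mult[OF lq_1_pow[OF gg(1), of "nat (b - a)"], of "gp a"] by (simp add: mult.commute)
  then show ?thesis using e by simp
qed

lemma gp_max: "gp a + gp b = gp (max a b)"
proof (cases "a \<le> b")
  case True then show ?thesis using gp_mono[OF True] unfolding lq_def by (simp add: max_def)
next
  case False then have "b \<le> a" by simp
  then show ?thesis using gp_mono[of b a] unfolding lq_def by (simp add: max_def add.commute)
qed

lemma gp_pow: "gp a ^ m = gp (a * int m)"
  by (induction m) (simp_all add: gp0 gp_add[symmetric] algebra_simps)

lemma T_gp: "\<exists>n0>0. \<forall>k. T k = gp (n0 * k)"
proof -
  obtain n0 where n0: "T 1 = gp n0" using rep T_nz by blast
  have "n0 > 0"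
  proof (rule ccontr)
    assume "\<not> n0 > 0"
    then have "lq (T 1) 1" using gp_mono[of n0 0] n0 gp0 by simp
    moreover have "lq 1 (T 1)" using lq_T[of 0 1] by (simp add: T0)
    ultimately have "T 1 = T 0" using lq_antisym T0 by simp
    then show False using T_inj by fastforce
  qed
  moreover have pos: "T (int m) = gp (n0 * int m)" for m
    using T_pow[of 1 m] gp_pow[of n0 m] n0 by simp
  have "T k = gp (n0 * k)" for k
  proof (cases "k \<ge> 0")
    case True then show ?thesis using pos[of "nat k"] by simp
  next
    case False
    define m where "m = nat (-k)"
    have k: "k = - int m" unfolding m_def using False by simp
    have "T k = T k * (gp (n0 * int m) * gp (n0 * k))" using gp_add[of "n0 * int m" "n0 * k"] gp0 k by simp
    also have "\<dots> = gp (n0 * k) * (T k * T (int m))" using pos[of m] by (simp add: ac_simps)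
    also have "\<dots> = gp (n0 * k)" using T_inv[of k] k by simp
    finally show ?thesis .
  qed
  ultimately show ?thesis by blast
qed

definition psi :: "'a \<Rightarrow> zmax" where
  "psi x = (if x = 0 then None else Some (THE k. x = gp k))"

lemma psi_gp: "psi (gp k) = Some k"
  unfolding psi_def using gp_nz gp_inj by (auto intro!: the_equality)

lemma psi0: "psi 0 = None" unfolding psi_def by simp

lemma main: "\<exists>n::nat. n > 0 \<and> iso_to_Fn \<phi> n"
proof -
  obtain n0 where n0: "n0 > 0" "\<And>k. T k = gp (n0 * k)" using T_gp by blast
  have allrep: "x = 0 \<or> (\<exists>k. x = gp k)" for x using rep by blast
  have bij: "bij psi"
  proof (rule bijI)
    show "inj psi"
    proof (rule injI)
      fix x y assume h: "psi x = psi y"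
      show "x = y" using allrep[of x] allrep[of y] h
        by (auto simp: psi_gp psi0 dest: gp_inj)
    qed
    show "surj psi"
    proof (rule surjI)
      fix z :: zmax
      show "psi (case z of None \<Rightarrow> 0 | Some k \<Rightarrow> gp k) = z"
        by (cases z) (simp_all add: psi0 psi_gp)
    qed
  qed
  have hom: "hom_to_zmax psi"
    unfolding hom_to_zmax_def zmax_zero_def zmax_one_def
  proof (intro conjI allI)
    fix x y
    show "psi (x + y) = zmax_add (psi x) (psi y)"
      using allrep[of x] allrep[of y] by (auto simp: psi_gp psi0 gp_max)
    show "psi (x * y) = zmax_mult (psi x) (psi y)"
      using allrep[of x] allrep[of y] by (auto simp: psi_gp psi0 gp_add[symmetric])
  next
    show "psi 0 = None" by (rule psi0)
    show "psi 1 = Some 0" using psi_gp[of 0] gp0 by simp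
  qed
  have comp: "psi (\<phi> x) = Fn_embed (nat n0) x" for x
  proof (cases x)
    case None then show ?thesis by (simp add: phi_None psi0 Fn_embed_def)
  next
    case (Some k)
    have "\<phi> x = gp (n0 * k)" using n0(2)[of k] Some unfolding T_def by simp
    then show ?thesis using Some n0(1) by (simp add: psi_gp Fn_embed_def)
  qed
  show ?thesis unfolding iso_to_Fn_def using n0(1) bij hom comp
    by (intro exI[of _ "nat n0"]) auto
qed

end



theorem mainTheorem1:
  fixes \<phi> :: "zmax \<Rightarrow> 'a::comm_semiring_1"
  assumes "finite_zmax_extension \<phi>"
  shows "\<exists>n::nat. n > 0 \<and> iso_to_Fn \<phi> n"
proof -
  interpret IS \<phi> by unfold_locales (rule assms)
  show ?thesis by (rule main)
qed

end
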